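(* Let $\mathcal{G}$ be a hereditary graph family such that $\mathcal{G}_n\neq\emptyset$ for all $n$, let $r\geq 2$ and $0\leq \alpha \leq 1-\frac{1}{r}$. Suppose there is $n_1$ such that $\lambda_{\alpha}(\mathcal{G}_n)> \left(1-\frac{1}{r}\right)n-\left(1-\frac{1}{r}\right)$ for all $n\ge n_1$. Then the limit $$\pi_{\alpha}(\mathcal{G}):=\lim_{n\to \infty} \frac{\lambda_{\alpha}(\mathcal{G}_n)}{n}$$ exists, and $\pi_{\alpha}(\mathcal{G})\leq \frac{\lambda_{\alpha}(\mathcal{G}_n)}{n-1}$ for every $n\ge n_1$.
   Context: $\lambda_\alpha(G)$ is the largest eigenvalue of $A_\alpha(G)=\alpha D(G)+(1-\alpha)A(G)$ ($A$ adjacency matrix, $D$ diagonal degree matrix). A graph family is hereditary if it is closed under taking induced subgraphs. For a family $\mathcal{G}$, $\mathcal{G}_n$ is the set of $n$-vertex graphs in $\mathcal{G}$ and $\lambda_\alpha(\mathcal{G}_n)=\max_{G\in\mathcal{G}_n}\lambda_\alpha(G)$. *)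

theory Defs
  imports Complex_Main "Jordan_Normal_Form.Char_Poly"
begin

text \<open>A finite simple graph on the vertex set {0..<n}: a pair (n, E) where E is a
  symmetric irreflexive edge relation on {0..<n}.\<close>
type_synonym graph = "nat \<times> (nat \<times> nat) set"

definition is_graph :: "graph \<Rightarrow> bool" where
  "is_graph G = (snd G \<subseteq> {..<fst G} \<times> {..<fst G} \<and> sym (snd G) \<and> (\<forall>i. (i, i) \<notin> snd G))"

definition induced_sub :: "graph \<Rightarrow> nat \<Rightarrow> (nat \<Rightarrow> nat) \<Rightarrow> graph" where
  "induced_sub G k f = (k, {(i, j). i < k \<and> j < k \<and> (f i, f j) \<in> snd G})"

definition hereditary :: "graph set \<Rightarrow> bool" where
  "hereditary F = (\<forall>G\<in>F. \<forall>k f. inj_on f {..<k} \<and> f ` {..<k} \<subseteq> {..<fst G}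
                       \<longrightarrow> induced_sub G k f \<in> F)"

definition slice :: "graph set \<Rightarrow> nat \<Rightarrow> graph set" where
  "slice F n = {G \<in> F. fst G = n}"

definition degree :: "graph \<Rightarrow> nat \<Rightarrow> nat" where
  "degree G i = card {j. (i, j) \<in> snd G}"

definition A_alpha :: "real \<Rightarrow> graph \<Rightarrow> real mat" where
  "A_alpha \<alpha> G = mat (fst G) (fst G)
     (\<lambda>(i, j). \<alpha> * (if i = j then real (degree G i) else 0)
              + (1 - \<alpha>) * (if (i, j) \<in> snd G then 1 else 0))"

definition lambda_alpha :: "real \<Rightarrow> graph \<Rightarrow> real" where
  "lambda_alpha \<alpha> G = Max {k. eigenvalue (A_alpha \<alpha> G) k}"

definition lambda_fam :: "real \<Rightarrow> graph set \<Rightarrow> nat \<Rightarrow> real" where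
  "lambda_fam \<alpha> F n = Max (lambda_alpha \<alpha> ` slice F n)"

end

theory Submission
  imports Defs "HOL-Analysis.Function_Topology"
begin

definition Qf :: "nat \<Rightarrow> (nat \<Rightarrow> nat \<Rightarrow> real) \<Rightarrow> (nat \<Rightarrow> real) \<Rightarrow> real" where
  "Qf n a y = (\<Sum>i<n. \<Sum>j<n. a i j * y i * y j)"

definition nsq :: "nat \<Rightarrow> (nat \<Rightarrow> real) \<Rightarrow> real" where
  "nsq n y = (\<Sum>i<n. (y i)^2)"

lemma nsq_nonneg: "nsq n y \<ge> 0"
  unfolding nsq_def by (intro sum_nonneg) auto

lemma compact_box:
  fixes n :: nat
  shows "compact (Pi\<^sub>E UNIV (\<lambda>i. if i < n then {-1..1::real} else {0}))"
proof -
  have "compactin (product_topology (\<lambda>i. euclidean) UNIV)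
          (Pi\<^sub>E UNIV (\<lambda>i. if i < n then {-1..1::real} else {0}))"
    by (subst compactin_PiE) auto
  then show ?thesis by (simp add: euclidean_product_topology)
qed

lemma cont_Qf: "continuous_on A (Qf n a)"
  unfolding Qf_def
  by (intro continuous_intros continuous_on_subset[OF continuous_on_product_coordinates]) auto

lemma cont_nsq: "continuous_on A (nsq n)"
  unfolding nsq_def
  by (intro continuous_intros continuous_on_subset[OF continuous_on_product_coordinates]) auto

lemma Qf_scale: "Qf n a (\<lambda>i. c * y i) = c^2 * Qf n a y"
  unfolding Qf_def power2_eq_square by (simp add: sum_distrib_left algebra_simps)

lemma nsq_scale: "nsq n (\<lambda>i. c * y i) = c^2 * nsq n y"
  unfolding nsq_def by (simp add: sum_distrib_left algebra_simps power_mult_distrib)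

lemma Qf_cong: "(\<And>i. i < n \<Longrightarrow> y i = z i) \<Longrightarrow> Qf n a y = Qf n a z"
  unfolding Qf_def by (intro sum.cong) auto

lemma nsq_cong: "(\<And>i. i < n \<Longrightarrow> y i = z i) \<Longrightarrow> nsq n y = nsq n z"
  unfolding nsq_def by (intro sum.cong) auto

lemma Qf_expand:
  assumes sym: "\<And>i j. a i j = a j i"
  shows "Qf n a (\<lambda>i. x i + t * z i) = Qf n a x + 2 * t * (\<Sum>i<n. \<Sum>j<n. a i j * x i * z j) + t^2 * Qf n a z"
proof -
  have sw: "(\<Sum>i<n. \<Sum>j<n. a i j * z i * x j) = (\<Sum>i<n. \<Sum>j<n. a i j * x i * z j)"
    by (subst sum.swap) (simp add: sym mult.commute mult.left_commute)
  have "Qf n a (\<lambda>i. x i + t * z i) = (\<Sum>i<n. \<Sum>j<n. a i j * x i * x j + t * (a i j * x i * z j) + t * (a i j * z i * x j) + t^2 * (a i j * z i * z j))"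
    unfolding Qf_def by (intro sum.cong refl) (simp add: algebra_simps power2_eq_square)
  also have "\<dots> = Qf n a x + t * (\<Sum>i<n. \<Sum>j<n. a i j * x i * z j) + t * (\<Sum>i<n. \<Sum>j<n. a i j * z i * x j) + t^2 * Qf n a z"
    unfolding Qf_def by (simp add: sum.distrib sum_distrib_left)
  finally show ?thesis using sw by simp
qed

lemma nsq_expand:
  shows "nsq n (\<lambda>i. x i + t * z i) = nsq n x + 2 * t * (\<Sum>i<n. x i * z i) + t^2 * nsq n z"
proof -
  have "nsq n (\<lambda>i. x i + t * z i) = (\<Sum>i<n. (x i)^2 + 2 * t * (x i * z i) + t^2 * (z i)^2)"
    unfolding nsq_def by (intro sum.cong refl) (simp add: algebra_simps power2_eq_square)
  then show ?thesis unfolding nsq_def by (simp add: sum.distrib sum_distrib_left)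
qed

lemma quad_nonpos_lin0:
  fixes c d :: real
  assumes "\<And>t. 2 * t * c + t^2 * d \<le> 0"
  shows "c = 0"
proof (rule ccontr)
  assume c: "c \<noteq> 0"
  define e where "e = 1 / (\<bar>d\<bar> + 1)"
  have e: "e > 0" "e * \<bar>d\<bar> < 1" unfolding e_def by (auto simp: field_simps)
  have "2 * (e * c) * c + (e * c)^2 * d \<le> 0" using assms by blast
  hence "c^2 * (e * (2 + e * d)) \<le> 0" by (simp add: algebra_simps power2_eq_square)
  moreover have "e * d \<ge> - (e * \<bar>d\<bar>)" using e(1) by (simp add: abs_if)
  hence "2 + e * d > 0" using e by linarith
  hence P: "e * (2 + e * d) > 0" using e by simp
  have C: "c^2 > 0" using c by simp
  have "c^2 * (e * (2 + e * d)) > 0" by (rule mult_pos_pos[OF C P])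
  with \<open>c^2 * (e * (2 + e * d)) \<le> 0\<close> show False by linarith
qed

lemma rayleigh_max:
  fixes a :: "nat \<Rightarrow> nat \<Rightarrow> real"
  assumes sym: "\<And>i j. a i j = a j i" and n: "n \<ge> 1"
  shows "\<exists>x. nsq n x = 1 \<and> (\<forall>y. Qf n a y \<le> Qf n a x * nsq n y)
            \<and> (\<forall>k<n. (\<Sum>i<n. a k i * x i) = Qf n a x * x k)"
proof -
  define K where "K = Pi\<^sub>E UNIV (\<lambda>i. if i < n then {-1..1::real} else {0}) \<inter> {y. nsq n y = 1}"
  have cK: "compact K" unfolding K_def
    by (intro compact_Int_closed compact_box closed_Collect_eq cont_nsq continuous_on_const)
  define e0 :: "nat \<Rightarrow> real" where "e0 = (\<lambda>i. if i = 0 then 1 else 0)"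
  have "nsq n e0 = (\<Sum>i<n. if i = 0 then 1 else 0)" unfolding nsq_def
    by (intro sum.cong) (auto simp: e0_def)
  hence "nsq n e0 = 1" using n by simp
  hence "e0 \<in> K" unfolding K_def e0_def using n by auto
  hence neK: "K \<noteq> {}" by auto
  obtain x where xK: "x \<in> K" and xmax: "\<And>y. y \<in> K \<Longrightarrow> Qf n a y \<le> Qf n a x"
    using continuous_attains_sup[OF cK neK cont_Qf] by blast
  define \<mu> where "\<mu> = Qf n a x"
  have x1: "nsq n x = 1" using xK unfolding K_def by auto
  have bound: "Qf n a y \<le> \<mu> * nsq n y" for y
  proof (cases "nsq n y = 0")
    case True
    have "\<forall>i\<in>{..<n}. (y i)^2 = 0" using True unfolding nsq_def
      by (subst sum_nonneg_eq_0_iff[symmetric]) auto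
    hence "Qf n a y = Qf n a (\<lambda>i. 0 * y i)" by (intro Qf_cong) auto
    also have "\<dots> = 0" by (simp only: Qf_scale) simp
    finally show ?thesis using True by simp
  next
    case False
    define s where "s = nsq n y"
    have s: "s > 0" using False nsq_nonneg[of n y] unfolding s_def by linarith
    define y' where "y' = (\<lambda>i. if i < n then (1 / sqrt s) * y i else 0)"
    have ny': "nsq n y' = 1"
    proof -
      have "nsq n y' = nsq n (\<lambda>i. (1 / sqrt s) * y i)" by (intro nsq_cong) (simp add: y'_def)
      also have "\<dots> = 1" using s unfolding nsq_scale s_def by (simp add: power_divide)
      finally show ?thesis .
    qed
    have "\<bar>y' i\<bar> \<le> 1" if i: "i < n" for i
    proof -
      have "(y' i)^2 \<le> nsq n y'" unfolding nsq_def using i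
        by (intro member_le_sum) auto
      hence "(y' i)^2 \<le> 1^2" using ny' by simp
      thus ?thesis using abs_le_square_iff[of "y' i" 1] by simp
    qed
    hence "\<forall>i. y' i \<in> (if i < n then {-1..1} else {0})"
    proof (intro allI)
      fix i
      assume h: "\<And>i. i < n \<Longrightarrow> \<bar>y' i\<bar> \<le> 1"
      show "y' i \<in> (if i < n then {-1..1} else {0})"
      proof (cases "i < n")
        case True thus ?thesis using h[OF True] by (simp add: abs_le_iff)
      qed (simp add: y'_def)
    qed
    hence "y' \<in> K" unfolding K_def using ny' by auto
    hence "Qf n a y' \<le> \<mu>" using xmax unfolding \<mu>_def by blast
    moreover have "Qf n a y' = Qf n a y / s"
    proof -
      have "Qf n a y' = Qf n a (\<lambda>i. (1 / sqrt s) * y i)" by (intro Qf_cong) (simp add: y'_def)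
      also have "\<dots> = Qf n a y / s" using s unfolding Qf_scale by (simp add: power_divide)
      finally show ?thesis .
    qed
    ultimately show ?thesis using s unfolding s_def by (simp add: divide_le_eq mult.commute)
  qed
  have eig: "(\<Sum>i<n. a k i * x i) = \<mu> * x k" if k: "k < n" for k
  proof -
    define z :: "nat \<Rightarrow> real" where "z = (\<lambda>i. if i = k then 1 else 0)"
    have "2 * t * ((\<Sum>i<n. a k i * x i) - \<mu> * x k) + t^2 * (a k k - \<mu>) \<le> 0" for t
    proof -
      have B: "(\<Sum>i<n. \<Sum>j<n. a i j * x i * z j) = (\<Sum>i<n. a k i * x i)"
        unfolding z_def using k by (simp add: if_distrib sum.delta cong: if_cong) (simp add: sym)
      have inner: "(\<Sum>j<n. a i j * z i * z j) = (if i = k then a k k else 0)" for i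
      proof (cases "i = k")
        case True
        have "(\<Sum>j<n. a i j * z i * z j) = (\<Sum>j<n. if j = k then a k k else 0)"
          by (intro sum.cong) (auto simp: z_def True)
        thus ?thesis using k True by simp
      qed (simp add: z_def)
      have Qz: "Qf n a z = a k k" unfolding Qf_def inner using k by simp
      have Iz: "(\<Sum>i<n. x i * z i) = x k" unfolding z_def using k
        by (simp add: if_distrib sum.delta cong: if_cong)
      have "nsq n z = (\<Sum>i<n. if i = k then 1 else 0)" unfolding nsq_def
        by (intro sum.cong) (auto simp: z_def)
      hence nz: "nsq n z = 1" using k by simp
      have "Qf n a (\<lambda>i. x i + t * z i) \<le> \<mu> * nsq n (\<lambda>i. x i + t * z i)" by (rule bound)
      thus ?thesis unfolding Qf_expand[OF sym] nsq_expand B Qz Iz nz x1 \<mu>_def[symmetric]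
        by (simp add: algebra_simps)
    qed
    hence "(\<Sum>i<n. a k i * x i) - \<mu> * x k = 0" by (rule quad_nonpos_lin0)
    thus ?thesis by simp
  qed
  show ?thesis using x1 bound eig unfolding \<mu>_def by blast
qed

definition ent :: "real \<Rightarrow> graph \<Rightarrow> nat \<Rightarrow> nat \<Rightarrow> real" where
  "ent \<alpha> G i j = \<alpha> * (if i = j then real (degree G i) else 0) + (1 - \<alpha>) * (if (i, j) \<in> snd G then 1 else 0)"

lemma ent_sym: "is_graph G \<Longrightarrow> ent \<alpha> G i j = ent \<alpha> G j i"
  unfolding ent_def is_graph_def by (auto dest: symD)

lemma Qf_rows: "Qf n a y = (\<Sum>i<n. y i * (\<Sum>j<n. a i j * y j))"
  unfolding Qf_def by (simp add: sum_distrib_left mult_ac)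

lemma A_alpha_carrier: "A_alpha \<alpha> G \<in> carrier_mat (fst G) (fst G)"
  unfolding A_alpha_def by simp

lemma A_alpha_index: "i < fst G \<Longrightarrow> j < fst G \<Longrightarrow> A_alpha \<alpha> G $$ (i, j) = ent \<alpha> G i j"
  unfolding A_alpha_def ent_def by simp

lemma mult_A_alpha: assumes "v \<in> carrier_vec (fst G)" "k < fst G"
  shows "(A_alpha \<alpha> G *\<^sub>v v) $ k = (\<Sum>j<fst G. ent \<alpha> G k j * v $ j)"
proof -
  have "(A_alpha \<alpha> G *\<^sub>v v) $ k = row (A_alpha \<alpha> G) k \<bullet> v"
    using assms A_alpha_carrier[of \<alpha> G] by simp
  also have "\<dots> = (\<Sum>j\<in>{0..<fst G}. row (A_alpha \<alpha> G) k $ j * v $ j)"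
    unfolding scalar_prod_def using assms by simp
  also have "\<dots> = (\<Sum>j<fst G. ent \<alpha> G k j * v $ j)"
    using assms A_alpha_carrier[of \<alpha> G]
    by (intro sum.cong) (auto simp: A_alpha_index)
  finally show ?thesis .
qed

lemma lambda_char:
  assumes g: "is_graph G" and n: "fst G \<ge> 1"
  shows "\<exists>x. nsq (fst G) x = 1 \<and> Qf (fst G) (ent \<alpha> G) x = lambda_alpha \<alpha> G
           \<and> (\<forall>y. Qf (fst G) (ent \<alpha> G) y \<le> lambda_alpha \<alpha> G * nsq (fst G) y)"
proof -
  define n where "n = fst G"
  define A where "A = A_alpha \<alpha> G"
  have A: "A \<in> carrier_mat n n" unfolding A_def n_def by (rule A_alpha_carrier)
  obtain x where x1: "nsq n x = 1" and bd: "\<forall>y. Qf n (ent \<alpha> G) y \<le> Qf n (ent \<alpha> G) x * nsq n y"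
    and ev: "\<forall>k<n. (\<Sum>i<n. ent \<alpha> G k i * x i) = Qf n (ent \<alpha> G) x * x k"
    using rayleigh_max[of "ent \<alpha> G" n] ent_sym[OF g] n unfolding n_def by blast
  define \<mu> where "\<mu> = Qf n (ent \<alpha> G) x"
  define v where "v = vec n x"
  have v: "v \<in> carrier_vec n" unfolding v_def by simp
  have "A *\<^sub>v v = \<mu> \<cdot>\<^sub>v v"
  proof (rule eq_vecI)
    show "dim_vec (A *\<^sub>v v) = dim_vec (\<mu> \<cdot>\<^sub>v v)" using A v by simp
    fix k assume "k < dim_vec (\<mu> \<cdot>\<^sub>v v)"
    hence k: "k < n" using v by simp
    have "(A *\<^sub>v v) $ k = (\<Sum>j<n. ent \<alpha> G k j * v $ j)"
      unfolding A_def n_def by (rule mult_A_alpha) (use v k in \<open>auto simp: n_def\<close>)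
    also have "\<dots> = (\<Sum>j<n. ent \<alpha> G k j * x j)" by (intro sum.cong) (auto simp: v_def)
    also have "\<dots> = \<mu> * x k" using ev k unfolding \<mu>_def by blast
    finally show "(A *\<^sub>v v) $ k = (\<mu> \<cdot>\<^sub>v v) $ k" using k v by (simp add: v_def)
  qed
  moreover have "v \<noteq> 0\<^sub>v n"
  proof
    assume "v = 0\<^sub>v n"
    hence "\<forall>i<n. x i = 0" unfolding v_def by (metis index_vec index_zero_vec(1))
    hence "nsq n x = 0" unfolding nsq_def by simp
    with x1 show False by simp
  qed
  ultimately have "eigenvector A v \<mu>" unfolding eigenvector_def using A v by auto
  hence evm: "eigenvalue A \<mu>" unfolding eigenvalue_def by blast
  have le: "k \<le> \<mu>" if ek: "eigenvalue A k" for k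
  proof -
    obtain w where w: "eigenvector A w k" using ek unfolding eigenvalue_def by blast
    have wc: "w \<in> carrier_vec n" and wnz: "w \<noteq> 0\<^sub>v n" and wk: "A *\<^sub>v w = k \<cdot>\<^sub>v w"
      using w A unfolding eigenvector_def by auto
    define y where "y = (\<lambda>i. w $ i)"
    have "Qf n (ent \<alpha> G) y = (\<Sum>i<n. y i * (k * y i))"
      unfolding Qf_rows
    proof (intro sum.cong refl)
      fix i assume i: "i \<in> {..<n}"
      have "(\<Sum>j<n. ent \<alpha> G i j * y j) = (A *\<^sub>v w) $ i"
        unfolding A_def y_def using wc i by (subst mult_A_alpha) (auto simp: n_def)
      also have "\<dots> = k * y i" using wk wc i unfolding y_def by simp
      finally show "y i * (\<Sum>j<n. ent \<alpha> G i j * y j) = y i * (k * y i)" by simp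
    qed
    also have "\<dots> = k * nsq n y" unfolding nsq_def by (simp add: sum_distrib_left power2_eq_square mult_ac)
    finally have Qy: "Qf n (ent \<alpha> G) y = k * nsq n y" .
    have "nsq n y \<noteq> 0"
    proof
      assume "nsq n y = 0"
      hence "\<forall>i\<in>{..<n}. (y i)^2 = 0" unfolding nsq_def
        by (subst sum_nonneg_eq_0_iff[symmetric]) auto
      hence "w = 0\<^sub>v n" using wc unfolding y_def by (intro eq_vecI) auto
      with wnz show False by simp
    qed
    hence pos: "nsq n y > 0" using nsq_nonneg[of n y] by linarith
    have "k * nsq n y \<le> \<mu> * nsq n y" using bd Qy unfolding \<mu>_def by metis
    thus ?thesis using pos by simp
  qed
  have fin: "finite {k. eigenvalue A k}"
  proof -
    have "char_poly A \<noteq> 0" using degree_monic_char_poly[OF A] n unfolding n_def by auto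
    hence "finite {k. poly (char_poly A) k = 0}" by (rule poly_roots_finite)
    thus ?thesis using eigenvalue_root_char_poly[OF A] by simp
  qed
  have "lambda_alpha \<alpha> G = \<mu>" unfolding lambda_alpha_def A_def[symmetric]
    by (rule Max_eqI[OF fin]) (use le evm in auto)
  thus ?thesis using x1 bd unfolding \<mu>_def n_def by auto
qed

lemma card_filter_sum: "finite A \<Longrightarrow> real (card {j \<in> A. P j}) = (\<Sum>j\<in>A. if P j then 1 else 0)"
  by (simp add: sum.inter_filter[symmetric])

definition ind :: "graph \<Rightarrow> nat \<Rightarrow> nat \<Rightarrow> real" where
  "ind G i j = (if (i, j) \<in> snd G then 1 else 0)"

lemma Qsplit:
  assumes deg: "\<And>i. i < m \<Longrightarrow> real (degree G i) = (\<Sum>j<m. ind G i j)"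
  shows "Qf m (ent \<alpha> G) y = (\<Sum>i<m. \<Sum>j<m. \<alpha> * ind G i j * (y i)^2 + (1 - \<alpha>) * ind G i j * y i * y j)"
proof -
  have "Qf m (ent \<alpha> G) y = (\<Sum>i<m. \<Sum>j<m. (\<alpha> * (if i = j then real (degree G i) else 0)) * y i * y j
          + (1 - \<alpha>) * ind G i j * y i * y j)"
    unfolding Qf_def ent_def ind_def by (intro sum.cong refl) (simp add: algebra_simps)
  also have "\<dots> = (\<Sum>i<m. \<alpha> * real (degree G i) * (y i)^2 + (\<Sum>j<m. (1 - \<alpha>) * ind G i j * y i * y j))"
  proof (intro sum.cong refl)
    fix i assume i: "i \<in> {..<m}"
    have "(\<Sum>j<m. (\<alpha> * (if i = j then real (degree G i) else 0)) * y i * y j)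
        = (\<Sum>j<m. if j = i then \<alpha> * real (degree G i) * (y i)^2 else 0)"
      by (intro sum.cong refl) (auto simp: power2_eq_square)
    also have "\<dots> = \<alpha> * real (degree G i) * (y i)^2" using i by simp
    finally show "(\<Sum>j<m. (\<alpha> * (if i = j then real (degree G i) else 0)) * y i * y j
          + (1 - \<alpha>) * ind G i j * y i * y j) = \<alpha> * real (degree G i) * (y i)^2 + (\<Sum>j<m. (1 - \<alpha>) * ind G i j * y i * y j)"
      by (simp add: sum.distrib)
  qed
  also have "\<dots> = (\<Sum>i<m. \<Sum>j<m. \<alpha> * ind G i j * (y i)^2 + (1 - \<alpha>) * ind G i j * y i * y j)"
  proof (intro sum.cong refl)
    fix i assume i: "i \<in> {..<m}"
    show "\<alpha> * real (degree G i) * (y i)^2 + (\<Sum>j<m. (1 - \<alpha>) * ind G i j * y i * y j)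
        = (\<Sum>j<m. \<alpha> * ind G i j * (y i)^2 + (1 - \<alpha>) * ind G i j * y i * y j)"
      using deg[of i] i by (simp add: sum.distrib sum_distrib_left sum_distrib_right mult_ac)
  qed
  finally show ?thesis .
qed

lemma degree_G:
  assumes g: "is_graph G" and i: "i < fst G"
  shows "real (degree G i) = (\<Sum>j<fst G. ind G i j)"
proof -
  have "{j. (i, j) \<in> snd G} = {j \<in> {..<fst G}. (i, j) \<in> snd G}"
    using g unfolding is_graph_def by auto
  thus ?thesis unfolding degree_def ind_def
    using card_filter_sum[of "{..<fst G}" "\<lambda>j. (i, j) \<in> snd G"] by simp
qed

definition del :: "nat \<Rightarrow> nat \<Rightarrow> nat" where
  "del v i = (if i < v then i else Suc i)"

lemma del_inj: "inj_on (del v) A"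
  unfolding del_def inj_on_def by auto

lemma del_image: "v < n \<Longrightarrow> del v ` {..<n-1} = {..<n} - {v}"
proof
  assume v: "v < n"
  show "del v ` {..<n-1} \<subseteq> {..<n} - {v}" using v unfolding del_def by auto
  show "{..<n} - {v} \<subseteq> del v ` {..<n-1}"
  proof
    fix a assume a: "a \<in> {..<n} - {v}"
    show "a \<in> del v ` {..<n-1}"
    proof (cases "a < v")
      case True thus ?thesis using a v by (intro image_eqI[of _ _ a]) (auto simp: del_def)
    next
      case False
      then obtain b where "a = Suc b" "b \<ge> v" using a by (cases a) auto
      thus ?thesis using a v by (intro image_eqI[of _ _ b]) (auto simp: del_def)
    qed
  qed
qed

lemma sum_del:
  fixes g :: "nat \<Rightarrow> real"
  assumes v: "v < n"
  shows "(\<Sum>i<n-1. g (del v i)) = (\<Sum>a<n. if a = v then 0 else g a)"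
proof -
  have "(\<Sum>i<n-1. g (del v i)) = (\<Sum>a\<in>{..<n} - {v}. g a)"
    using sum.reindex[OF del_inj[of v "{..<n-1}"], of g] del_image[OF v] by simp
  also have "\<dots> = (\<Sum>a<n. if a = v then 0 else g a)"
    using v by (subst sum.remove[of _ v]) (auto intro!: sum.cong)
  finally show ?thesis .
qed

definition kk :: "real \<Rightarrow> graph \<Rightarrow> (nat \<Rightarrow> real) \<Rightarrow> nat \<Rightarrow> nat \<Rightarrow> real" where
  "kk \<alpha> G x a c = \<alpha> * ind G a c * (x a)^2 + (1 - \<alpha>) * ind G a c * x a * x c"

lemma QG:
  assumes g: "is_graph G"
  shows "Qf (fst G) (ent \<alpha> G) x = (\<Sum>a<fst G. \<Sum>c<fst G. kk \<alpha> G x a c)"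
  unfolding kk_def by (rule Qsplit) (rule degree_G[OF g])

lemma QH:
  assumes g: "is_graph G" and v: "v < fst G"
  shows "Qf (fst G - 1) (ent \<alpha> (induced_sub G (fst G - 1) (del v))) (\<lambda>i. x (del v i))
       = (\<Sum>a<fst G. \<Sum>c<fst G. if a \<noteq> v \<and> c \<noteq> v then kk \<alpha> G x a c else 0)"
proof -
  define n where "n = fst G"
  define H where "H = induced_sub G (n - 1) (del v)"
  have indH: "ind H i j = ind G (del v i) (del v j)" if "i < n - 1" "j < n - 1" for i j
    using that unfolding ind_def H_def induced_sub_def by auto
  have degH: "real (degree H i) = (\<Sum>j<n-1. ind H i j)" if i: "i < n - 1" for i
  proof -
    have "{j. (i, j) \<in> snd H} = {j \<in> {..<n-1}. (i, j) \<in> snd H}"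
      unfolding H_def induced_sub_def by auto
    thus ?thesis unfolding degree_def ind_def
      using card_filter_sum[of "{..<n-1}" "\<lambda>j. (i, j) \<in> snd H"] by simp
  qed
  have "Qf (n - 1) (ent \<alpha> H) (\<lambda>i. x (del v i))
      = (\<Sum>i<n-1. \<Sum>j<n-1. \<alpha> * ind H i j * (x (del v i))^2 + (1 - \<alpha>) * ind H i j * x (del v i) * x (del v j))"
    by (rule Qsplit) (rule degH)
  also have "\<dots> = (\<Sum>i<n-1. \<Sum>j<n-1. kk \<alpha> G x (del v i) (del v j))"
    unfolding kk_def by (intro sum.cong refl) (simp add: indH)
  also have "\<dots> = (\<Sum>i<n-1. \<Sum>c<n. if c = v then 0 else kk \<alpha> G x (del v i) c)"
  proof (rule sum.cong[OF refl])
    fix i show "(\<Sum>j<n-1. kk \<alpha> G x (del v i) (del v j)) = (\<Sum>c<n. if c = v then 0 else kk \<alpha> G x (del v i) c)"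
      using v unfolding n_def by (rule sum_del)
  qed
  also have "\<dots> = (\<Sum>a<n. if a = v then 0 else (\<Sum>c<n. if c = v then 0 else kk \<alpha> G x a c))"
    using v unfolding n_def by (rule sum_del)
  also have "\<dots> = (\<Sum>a<n. \<Sum>c<n. if a \<noteq> v \<and> c \<noteq> v then kk \<alpha> G x a c else 0)"
    by (intro sum.cong refl) (auto intro!: sum.cong)
  finally show ?thesis unfolding n_def H_def .
qed

lemma count_v:
  assumes "a < n" "c < n" "a \<noteq> c"
  shows "(\<Sum>v<n. if a \<noteq> v \<and> c \<noteq> v then (k::real) else 0) = real (n - 2) * k"
proof -
  have "(\<Sum>v<n. if a \<noteq> v \<and> c \<noteq> v then k else 0) = k * real (card {v \<in> {..<n}. a \<noteq> v \<and> c \<noteq> v})"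
    by (subst card_filter_sum) (auto simp: sum_distrib_left intro!: sum.cong)
  also have "{v \<in> {..<n}. a \<noteq> v \<and> c \<noteq> v} = {..<n} - {a, c}" by auto
  also have "card \<dots> = n - 2" using assms by (subst card_Diff_subset) auto
  finally show ?thesis by simp
qed

lemma sum_QH:
  assumes g: "is_graph G"
  shows "(\<Sum>v<fst G. \<Sum>a<fst G. \<Sum>c<fst G. if a \<noteq> v \<and> c \<noteq> v then kk \<alpha> G x a c else 0)
       = real (fst G - 2) * Qf (fst G) (ent \<alpha> G) x"
proof -
  define n where "n = fst G"
  have "(\<Sum>v<n. \<Sum>a<n. \<Sum>c<n. if a \<noteq> v \<and> c \<noteq> v then kk \<alpha> G x a c else 0)
      = (\<Sum>a<n. \<Sum>c<n. \<Sum>v<n. if a \<noteq> v \<and> c \<noteq> v then kk \<alpha> G x a c else 0)"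
    by (subst sum.swap) (subst (2) sum.swap, rule refl)
  also have "\<dots> = (\<Sum>a<n. \<Sum>c<n. real (n - 2) * kk \<alpha> G x a c)"
  proof (intro sum.cong refl)
    fix a c assume a: "a \<in> {..<n}" and c: "c \<in> {..<n}"
    show "(\<Sum>v<n. if a \<noteq> v \<and> c \<noteq> v then kk \<alpha> G x a c else 0) = real (n - 2) * kk \<alpha> G x a c"
    proof (cases "a = c")
      case True
      have "(c, c) \<notin> snd G" using g unfolding is_graph_def by auto
      hence z: "kk \<alpha> G x a c = 0" using True unfolding kk_def ind_def by simp
      show ?thesis by (simp only: z if_cancel sum.neutral_const mult_zero_right)
    next
      case False thus ?thesis using a c by (intro count_v) auto
    qed
  qed
  also have "\<dots> = real (n - 2) * Qf n (ent \<alpha> G) x"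
    unfolding n_def QG[OF g] by (simp add: sum_distrib_left)
  finally show ?thesis unfolding n_def .
qed

lemma fin_slice:
  assumes "\<forall>G\<in>F. is_graph G"
  shows "finite (slice F n)"
proof -
  have "slice F n \<subseteq> Pair n ` Pow ({..<n} \<times> {..<n})"
  proof
    fix G assume G: "G \<in> slice F n"
    obtain a b where ab: "G = (a, b)" by (cases G)
    show "G \<in> Pair n ` Pow ({..<n} \<times> {..<n})"
      using G assms unfolding ab slice_def is_graph_def by auto
  qed
  thus ?thesis by (rule finite_subset) auto
qed

lemma lf_ge:
  assumes "\<forall>G\<in>F. is_graph G" "G \<in> slice F n"
  shows "lambda_alpha \<alpha> G \<le> lambda_fam \<alpha> F n"
  unfolding lambda_fam_def using assms fin_slice[OF assms(1)] by (intro Max_ge) auto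

lemma lf_in:
  assumes "\<forall>G\<in>F. is_graph G" "slice F n \<noteq> {}"
  shows "\<exists>G\<in>slice F n. lambda_alpha \<alpha> G = lambda_fam \<alpha> F n"
proof -
  have "lambda_fam \<alpha> F n \<in> lambda_alpha \<alpha> ` slice F n"
    unfolding lambda_fam_def using assms fin_slice[OF assms(1)] by (intro Max_in) auto
  thus ?thesis by auto
qed

lemma Qf_unit:
  assumes k: "k < n"
  shows "Qf n a (\<lambda>i. if i = k then 1 else 0) = a k k"
proof -
  define z :: "nat \<Rightarrow> real" where "z = (\<lambda>i. if i = k then 1 else 0)"
  have inner: "(\<Sum>j<n. a i j * z i * z j) = (if i = k then a k k else 0)" for i
  proof (cases "i = k")
    case True
    have "(\<Sum>j<n. a i j * z i * z j) = (\<Sum>j<n. if j = k then a k k else 0)"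
      by (intro sum.cong) (auto simp: z_def True)
    thus ?thesis using k True by simp
  qed (simp add: z_def)
  have "Qf n a z = a k k" unfolding Qf_def inner using k by simp
  thus ?thesis unfolding z_def .
qed

lemma nsq_unit:
  assumes k: "k < n"
  shows "nsq n (\<lambda>i. if i = k then 1 else 0) = 1"
proof -
  have "nsq n (\<lambda>i. if i = k then 1 else 0) = (\<Sum>i<n. if i = k then 1 else 0)" unfolding nsq_def
    by (intro sum.cong) auto
  thus ?thesis using k by simp
qed

lemma lam_nonneg:
  assumes g: "is_graph G" and n: "fst G \<ge> 1" and a: "\<alpha> \<ge> 0"
  shows "lambda_alpha \<alpha> G \<ge> 0"
proof -
  obtain x where bd: "\<forall>y. Qf (fst G) (ent \<alpha> G) y \<le> lambda_alpha \<alpha> G * nsq (fst G) y"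
    using lambda_char[OF g n, of \<alpha>] by blast
  have "ent \<alpha> G 0 0 \<le> lambda_alpha \<alpha> G"
    using bd[rule_format, of "\<lambda>i. if i = 0 then 1 else 0"] n
    by (simp add: Qf_unit nsq_unit)
  moreover have "ent \<alpha> G 0 0 \<ge> 0" unfolding ent_def using g a unfolding is_graph_def by auto
  ultimately show ?thesis by linarith
qed

lemma lam_one:
  assumes g: "is_graph G" and n: "fst G = 1"
  shows "lambda_alpha \<alpha> G = 0"
proof -
  obtain x where "Qf (fst G) (ent \<alpha> G) x = lambda_alpha \<alpha> G"
    using lambda_char[OF g, of \<alpha>] n by auto
  hence "lambda_alpha \<alpha> G = kk \<alpha> G x 0 0" using QG[OF g, of \<alpha> x] n by simp
  moreover have "(0, 0) \<notin> snd G" using g unfolding is_graph_def by auto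
  ultimately show ?thesis unfolding kk_def ind_def by simp
qed

lemma mono_step:
  assumes A1: "\<forall>G\<in>F. is_graph G" and A2: "hereditary F" and A3: "slice F n \<noteq> {}" and n: "n \<ge> 2"
  shows "real (n - 2) * lambda_fam \<alpha> F n \<le> real (n - 1) * lambda_fam \<alpha> F (n - 1)"
proof -
  obtain G where G: "G \<in> slice F n" and lG: "lambda_alpha \<alpha> G = lambda_fam \<alpha> F n"
    using lf_in[OF A1 A3] by blast
  have g: "is_graph G" and fG: "fst G = n" using G A1 unfolding slice_def by auto
  obtain x where x1: "nsq n x = 1" and qx: "Qf n (ent \<alpha> G) x = lambda_fam \<alpha> F n"
    using lambda_char[OF g, of \<alpha>] fG n lG by auto
  define H where "H v = induced_sub G (n - 1) (del v)" for v
  have fH: "fst (H v) = n - 1" for v unfolding H_def induced_sub_def by simp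
  have Hin: "H v \<in> slice F (n - 1)" if v: "v < n" for v
  proof -
    have "induced_sub G (n - 1) (del v) \<in> F"
      using A2 G del_inj[of v "{..<n-1}"] del_image[OF v] fG
      unfolding hereditary_def slice_def by auto
    thus ?thesis using fH unfolding H_def slice_def by auto
  qed
  have nsqH: "nsq (n - 1) (\<lambda>i. x (del v i)) = 1 - (x v)^2" if v: "v < n" for v
  proof -
    have "nsq (n - 1) (\<lambda>i. x (del v i)) = (\<Sum>a<n. if a = v then 0 else (x a)^2)"
      unfolding nsq_def by (rule sum_del[OF v])
    also have "\<dots> = (\<Sum>a<n. (x a)^2) - (x v)^2"
    proof -
      have e1: "(\<Sum>a<n. (x a)^2) = (x v)^2 + (\<Sum>a\<in>{..<n}-{v}. (x a)^2)"
        using v by (subst sum.remove[of _ v]) auto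
      have e2: "(\<Sum>a<n. if a = v then 0 else (x a)^2) = 0 + (\<Sum>a\<in>{..<n}-{v}. if a = v then 0 else (x a)^2)"
        using v by (subst sum.remove[of _ v]) auto
      have e3: "(\<Sum>a\<in>{..<n}-{v}. if a = v then 0 else (x a)^2) = (\<Sum>a\<in>{..<n}-{v}. (x a)^2)"
        by (intro sum.cong) auto
      show ?thesis using e1 e2 e3 by simp
    qed
    finally show ?thesis using x1 unfolding nsq_def by simp
  qed
  have hb: "Qf (n - 1) (ent \<alpha> (H v)) (\<lambda>i. x (del v i)) \<le> lambda_fam \<alpha> F (n - 1) * (1 - (x v)^2)"
    if v: "v < n" for v
  proof -
    have gH: "is_graph (H v)" using Hin[OF v] A1 unfolding slice_def by auto
    have "fst (H v) \<ge> 1" using fH n by simp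
    from lambda_char[OF gH this, of \<alpha>]
    have "\<forall>z. Qf (fst (H v)) (ent \<alpha> (H v)) z \<le> lambda_alpha \<alpha> (H v) * nsq (fst (H v)) z" by blast
    hence "Qf (n - 1) (ent \<alpha> (H v)) (\<lambda>i. x (del v i)) \<le> lambda_alpha \<alpha> (H v) * (1 - (x v)^2)"
      using fH nsqH[OF v] by metis
    also have "\<dots> \<le> lambda_fam \<alpha> F (n - 1) * (1 - (x v)^2)"
    proof (rule mult_right_mono)
      show "lambda_alpha \<alpha> (H v) \<le> lambda_fam \<alpha> F (n - 1)" by (rule lf_ge[OF A1 Hin[OF v]])
      show "0 \<le> 1 - (x v)^2" using nsqH[OF v] nsq_nonneg[of "n-1" "\<lambda>i. x (del v i)"] by simp
    qed
    finally show ?thesis .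
  qed
  have "real (n - 2) * lambda_fam \<alpha> F n = (\<Sum>v<n. Qf (n - 1) (ent \<alpha> (H v)) (\<lambda>i. x (del v i)))"
  proof -
    have "(\<Sum>v<n. Qf (n - 1) (ent \<alpha> (H v)) (\<lambda>i. x (del v i)))
        = (\<Sum>v<n. \<Sum>a<n. \<Sum>c<n. if a \<noteq> v \<and> c \<noteq> v then kk \<alpha> G x a c else 0)"
      unfolding H_def using QH[OF g, of _ \<alpha> x] fG by (intro sum.cong refl) auto
    also have "\<dots> = real (n - 2) * Qf n (ent \<alpha> G) x" using sum_QH[OF g, of \<alpha> x] fG by simp
    finally show ?thesis using qx by simp
  qed
  also have "\<dots> \<le> (\<Sum>v<n. lambda_fam \<alpha> F (n - 1) * (1 - (x v)^2))"
    by (rule sum_mono) (use hb in auto)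
  also have "\<dots> = lambda_fam \<alpha> F (n - 1) * (real n - nsq n x)"
    unfolding nsq_def by (simp add: sum_distrib_left sum_subtractf right_diff_distrib)
  also have "\<dots> = real (n - 1) * lambda_fam \<alpha> F (n - 1)" using x1 n by (simp add: of_nat_diff)
  finally show ?thesis .
qed

theorem lemma3p4:
  fixes F :: "graph set" and r :: nat and \<alpha> :: real and n1 :: nat
  assumes "\<forall>G\<in>F. is_graph G"
    and "hereditary F"
    and "\<forall>n. slice F n \<noteq> {}"
    and "r \<ge> 2"
    and "0 \<le> \<alpha>" and "\<alpha> \<le> 1 - 1 / real r"
    and "\<forall>n\<ge>n1. lambda_fam \<alpha> F n > (1 - 1 / real r) * real n - (1 - 1 / real r)"
  shows "\<exists>L. (\<lambda>n. lambda_fam \<alpha> F n / real n) \<longlonglongrightarrow> L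
           \<and> (\<forall>n\<ge>n1. L \<le> lambda_fam \<alpha> F n / (real n - 1))"
proof -
  note A1 = assms(1) and A2 = assms(2) and A3 = assms(3)
  define lf where "lf = lambda_fam \<alpha> F"
  have lf1: "lf 1 = 0"
  proof -
    have "lambda_alpha \<alpha> ` slice F 1 = {0}"
      using A3 A1 lam_one[of _ \<alpha>] unfolding slice_def by fastforce
    thus ?thesis unfolding lf_def lambda_fam_def by simp
  qed
  have n1: "n1 \<ge> 2"
  proof (rule ccontr)
    assume "\<not> n1 \<ge> 2"
    hence "1 \<ge> n1" by simp
    hence "lf 1 > (1 - 1 / real r) * real (1::nat) - (1 - 1 / real r)" using assms(7) unfolding lf_def by blast
    thus False using lf1 by simp
  qed
  define b where "b n = lf (n + 2) / real (n + 1)" for n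
  have bnn: "b n \<ge> 0" for n
  proof -
    obtain G where G: "G \<in> slice F (n + 2)" "lambda_alpha \<alpha> G = lf (n + 2)"
      using lf_in[OF A1 A3[rule_format, of "n+2"], of \<alpha>] unfolding lf_def by blast
    have "lambda_alpha \<alpha> G \<ge> 0" using G A1 assms(5) by (intro lam_nonneg) (auto simp: slice_def)
    thus ?thesis unfolding b_def using G by simp
  qed
  have dec: "decseq b"
  proof (rule decseq_SucI)
    fix n
    have "real (n + 3 - 2) * lf (n + 3) \<le> real (n + 3 - 1) * lf (n + 3 - 1)"
      unfolding lf_def by (rule mono_step[OF A1 A2 A3[rule_format]]) simp
    hence "real (n + 1) * lf (n + 3) \<le> real (n + 2) * lf (n + 2)" by (simp add: numeral_eq_Suc)
    thus "b (Suc n) \<le> b n" unfolding b_def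
      by (simp add: field_simps numeral_eq_Suc del: of_nat_Suc)
  qed
  obtain L where bL: "b \<longlonglongrightarrow> L" and Lle: "\<forall>i. L \<le> b i"
    using decseq_convergent[OF dec, of 0] bnn by blast
  have "(\<lambda>n. b n * (real (Suc n) / real (Suc (Suc n)))) \<longlonglongrightarrow> L * 1"
    by (intro tendsto_mult bL LIMSEQ_Suc[OF LIMSEQ_n_over_Suc_n])
  moreover have "b n * (real (Suc n) / real (Suc (Suc n))) = lf (n + 2) / real (n + 2)" for n
  proof -
    have aux: "\<And>(y::real) a c. a \<noteq> 0 \<Longrightarrow> y / a * (a / c) = y / c"
      by (case_tac "c = 0") (simp_all add: field_simps)
    have "b n * (real (Suc n) / real (Suc (Suc n))) = lf (n + 2) / real (Suc n) * (real (Suc n) / real (n + 2))"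
      unfolding b_def by simp
    also have "\<dots> = lf (n + 2) / real (n + 2)" by (rule aux) simp
    finally show ?thesis .
  qed
  ultimately have "(\<lambda>n. lf (n + 2) / real (n + 2)) \<longlonglongrightarrow> L" by simp
  hence lim: "(\<lambda>n. lf n / real n) \<longlonglongrightarrow> L" by (rule LIMSEQ_offset)
  have "L \<le> lf n / (real n - 1)" if n: "n \<ge> n1" for n
  proof -
    have "n \<ge> 2" using n n1 by simp
    hence e: "n - 2 + 2 = n" "n - 2 + 1 = n - 1" by simp_all
    have "b (n - 2) = lf n / (real n - 1)" unfolding b_def e using \<open>n \<ge> 2\<close> by (simp add: of_nat_diff)
    thus ?thesis using Lle by metis
  qed
  thus ?thesis using lim unfolding lf_def by blast
qed

end
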